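(* Let $G$ be a planar trivalent graph with a perfect matching $M$. If $G\setminus M$ (the graph with all vertices of $G$ and the edges not in $M$) contains a cycle with exactly $3$ edges, then $\langle G:M\rangle_2(1)=0$.
   Context: Graphs are finite and may have multiple edges; trivalent means every vertex has degree $3$. The $2$-factor polynomial $\langle G:M\rangle_2(z)\in\mathbb{Z}[z,z^{-1}]$ is defined as follows. Embed $G$ in the $2$-sphere. For a matching edge $e=uv$, let $\alpha,\beta$ be the other two edge-ends at $u$ and $\gamma,\delta$ the other two at $v$, labelled so that in a small disk around $e$ they appear in cyclic order $\alpha,\beta,\delta,\gamma$. The $0$-resolution at $e$ deletes $e,u,v$ and joins $\alpha$ to $\gamma$ and $\beta$ to $\delta$ by disjoint arcs; the $1$-resolution joins $\alpha$ to $\delta$ and $\beta$ to $\gamma$ by two arcs crossing once. For a state $s:M\to\{0,1\}$, resolving every matching edge accordingly yields $c(s)$ immersed closed curves, and $\langle G:M\rangle_2(z)=\sum_s(-z)^{|s|}(z+z^{-1})^{c(s)}$, where $|s|$ is the number of edges assigned $1$. This is independent of the chosen embedding. *)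

theory Defs
  imports Complex_Main
begin

text \<open>A trivalent graph (multi-edges and loops allowed) embedded in an oriented surface is
  encoded as a combinatorial map (rotation system): a finite set D of darts (half-edges),
  a fixed-point-free involution iota pairing the two ends of each edge, and a rotation
  sigma whose cycles are the vertices (cyclic order of edge-ends around each vertex).\<close>

definition trivalent_map :: "'d set \<Rightarrow> ('d \<Rightarrow> 'd) \<Rightarrow> ('d \<Rightarrow> 'd) \<Rightarrow> bool" where
  "trivalent_map D iota sigma \<longleftrightarrow> finite D \<and>
     (\<forall>d\<in>D. iota d \<in> D \<and> iota d \<noteq> d \<and> iota (iota d) = d) \<and>
     (\<forall>d\<in>D. sigma d \<in> D \<and> sigma d \<noteq> d \<and> sigma (sigma (sigma d)) = d)"

definition orbit_of :: "('d \<Rightarrow> 'd) \<Rightarrow> 'd \<Rightarrow> 'd set" where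
  "orbit_of f d = {(f ^^ n) d | n. True}"

definition orbits :: "('d \<Rightarrow> 'd) \<Rightarrow> 'd set \<Rightarrow> 'd set set" where
  "orbits f D = orbit_of f ` D"

text \<open>Vertices = sigma-orbits; faces = orbits of sigma o iota; connected components of the map.\<close>

definition map_components :: "'d set \<Rightarrow> ('d \<Rightarrow> 'd) \<Rightarrow> ('d \<Rightarrow> 'd) \<Rightarrow> 'd set set" where
  "map_components D iota sigma =
     D // (({(d, iota d) | d. d \<in> D} \<union> {(d, sigma d) | d. d \<in> D}
           \<union> {(iota d, d) | d. d \<in> D} \<union> {(sigma d, d) | d. d \<in> D})\<^sup>* \<inter> D \<times> D)"

text \<open>The embedding is spherical (genus 0 on every component) iff Euler's formula
  V - E + F = 2 holds for every connected component, i.e. summed: V - E + F = 2 C,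
  with E = |D|/2.  Multiplied by 2 to stay in the integers.\<close>

definition planar_map :: "'d set \<Rightarrow> ('d \<Rightarrow> 'd) \<Rightarrow> ('d \<Rightarrow> 'd) \<Rightarrow> bool" where
  "planar_map D iota sigma \<longleftrightarrow>
     2 * int (card (orbits sigma D)) - int (card D) + 2 * int (card (orbits (sigma \<circ> iota) D))
       = 4 * int (card (map_components D iota sigma))"

text \<open>A perfect matching, given as the set Md of darts of matching edges:
  closed under iota, and every vertex carries exactly one matching dart.\<close>

definition perfect_matching :: "'d set \<Rightarrow> ('d \<Rightarrow> 'd) \<Rightarrow> ('d \<Rightarrow> 'd) \<Rightarrow> 'd set \<Rightarrow> bool" where
  "perfect_matching D iota sigma Md \<longleftrightarrow> Md \<subseteq> D \<and> (\<forall>d\<in>Md. iota d \<in> Md) \<and>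
     (\<forall>d\<in>D. card ({d, sigma d, sigma (sigma d)} \<inter> Md) = 1)"

definition vertex_of :: "('d \<Rightarrow> 'd) \<Rightarrow> 'd \<Rightarrow> 'd set" where
  "vertex_of sigma d = {d, sigma d, sigma (sigma d)}"

definition matching_edges :: "('d \<Rightarrow> 'd) \<Rightarrow> 'd set \<Rightarrow> 'd set set" where
  "matching_edges iota Md = (\<lambda>d. {d, iota d}) ` Md"

definition has_triangle_off_matching ::
  "'d set \<Rightarrow> ('d \<Rightarrow> 'd) \<Rightarrow> ('d \<Rightarrow> 'd) \<Rightarrow> 'd set \<Rightarrow> bool" where
  "has_triangle_off_matching D iota sigma Md \<longleftrightarrow>
     (\<exists>d1 d2 d3. d1 \<in> D - Md \<and> d2 \<in> D - Md \<and> d3 \<in> D - Md \<and>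
        d2 \<in> vertex_of sigma (iota d1) \<and> d3 \<in> vertex_of sigma (iota d2) \<and>
        d1 \<in> vertex_of sigma (iota d3) \<and>
        vertex_of sigma d1 \<noteq> vertex_of sigma d2 \<and>
        vertex_of sigma d2 \<noteq> vertex_of sigma d3 \<and>
        vertex_of sigma d1 \<noteq> vertex_of sigma d3)"

text \<open>Resolution of a state S (set of matching edges assigned 1).  For a matching dart d at
  u with iota d at v, the other ends are sigma d, sigma(sigma d) at u and
  sigma(iota d), sigma(sigma(iota d)) at v; in cyclic order around the edge they appear as
  alpha = sigma d, beta = sigma(sigma d), delta = sigma(iota d), gamma = sigma(sigma(iota d)).
  0-resolution: alpha-gamma, beta-delta; 1-resolution: alpha-delta, beta-gamma.
  The curves are the connected components of the non-matching darts under the edge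
  pairing together with the resolution arcs.\<close>

definition resolution_rel ::
  "'d set \<Rightarrow> ('d \<Rightarrow> 'd) \<Rightarrow> ('d \<Rightarrow> 'd) \<Rightarrow> 'd set \<Rightarrow> 'd set set \<Rightarrow> ('d \<times> 'd) set" where
  "resolution_rel D iota sigma Md S =
     {(d, iota d) | d. d \<in> D - Md} \<union>
     {p. \<exists>d\<in>Md. if {d, iota d} \<in> S
          then p = (sigma d, sigma (iota d)) \<or> p = (sigma (sigma d), sigma (sigma (iota d)))
          else p = (sigma d, sigma (sigma (iota d))) \<or> p = (sigma (sigma d), sigma (iota d))}"

definition num_curves ::
  "'d set \<Rightarrow> ('d \<Rightarrow> 'd) \<Rightarrow> ('d \<Rightarrow> 'd) \<Rightarrow> 'd set \<Rightarrow> 'd set set \<Rightarrow> nat" where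
  "num_curves D iota sigma Md S =
     (let R = resolution_rel D iota sigma Md S
      in card ((D - Md) // ((R \<union> R\<inverse>)\<^sup>* \<inter> (D - Md) \<times> (D - Md))))"

definition two_factor_poly ::
  "'d set \<Rightarrow> ('d \<Rightarrow> 'd) \<Rightarrow> ('d \<Rightarrow> 'd) \<Rightarrow> 'd set \<Rightarrow> real \<Rightarrow> real" where
  "two_factor_poly D iota sigma Md z =
     (\<Sum>S\<in>Pow (matching_edges iota Md).
        (- z) ^ card S * (z + inverse z) ^ num_curves D iota sigma Md S)"

end

theory Submission
  imports Defs
begin

definition compat :: "('d \<times> 'd) set \<Rightarrow> 'd set \<Rightarrow> bool" where
  "compat R X \<longleftrightarrow> (\<forall>(x,y)\<in>R. (x \<in> X \<longleftrightarrow> y \<in> X))"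

lemma compat_rtrancl:
  assumes "(x,y) \<in> (R \<union> R\<inverse>)\<^sup>*" "compat R X"
  shows "x \<in> X \<longleftrightarrow> y \<in> X"
  using assms(1)
proof (induction rule: rtrancl_induct)
  case base then show ?case by simp
next
  case (step y z) then show ?case using assms(2) unfolding compat_def by auto
qed

lemma equiv_r:
  assumes "R \<subseteq> N \<times> N"
  shows "equiv N ((R \<union> R\<inverse>)\<^sup>* \<inter> N \<times> N)"
proof -
  have s: "sym ((R \<union> R\<inverse>)\<^sup>*)" by (rule sym_rtrancl[OF sym_Un_converse])
  show ?thesis unfolding equiv_def refl_on_def sym_def trans_def
    using s unfolding sym_def by (auto intro: rtrancl_trans)
qed

lemma count_compat:
  assumes fin: "finite N" and RN: "R \<subseteq> N \<times> N"
  shows "card {X \<in> Pow N. compat R X} = 2 ^ card (N // ((R \<union> R\<inverse>)\<^sup>* \<inter> N \<times> N))"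
proof -
  define r where "r = (R \<union> R\<inverse>)\<^sup>* \<inter> N \<times> N"
  have eq: "equiv N r" unfolding r_def by (rule equiv_r[OF RN])
  have finq: "finite (N // r)" using fin unfolding r_def by (intro finite_quotient) auto
  have inj: "inj_on Union (Pow (N // r))"
  proof (rule inj_onI)
    fix Q1 Q2 assume Q1: "Q1 \<in> Pow (N // r)" and Q2: "Q2 \<in> Pow (N // r)" and U: "\<Union>Q1 = \<Union>Q2"
    have *: "Q1 \<subseteq> Q2" if Q1: "Q1 \<in> Pow (N // r)" and Q2: "Q2 \<in> Pow (N // r)" and U: "\<Union>Q1 = \<Union>Q2" for Q1 Q2
    proof
      fix C assume C: "C \<in> Q1"
      then have Cq: "C \<in> N // r" using Q1 by auto
      then obtain x where x: "x \<in> C" using in_quotient_imp_non_empty[OF eq] by blast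
      then obtain C' where C': "C' \<in> Q2" "x \<in> C'" using U C by blast
      then have "C' \<in> N // r" using Q2 by auto
      then have "C = C'" using quotient_disj[OF eq Cq] x C' by blast
      then show "C \<in> Q2" using C' by simp
    qed
    show "Q1 = Q2" using *[OF Q1 Q2 U] *[OF Q2 Q1 U[symmetric]] by blast
  qed
  have img: "{X \<in> Pow N. compat R X} = Union ` Pow (N // r)"
  proof
    show "{X \<in> Pow N. compat R X} \<subseteq> Union ` Pow (N // r)"
    proof
      fix X assume X: "X \<in> {X \<in> Pow N. compat R X}"
      have "X = \<Union>{C \<in> N // r. C \<subseteq> X}"
      proof
        show "X \<subseteq> \<Union>{C \<in> N // r. C \<subseteq> X}"
        proof
          fix x assume x: "x \<in> X"
          then have xN: "x \<in> N" using X by auto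
          have "r``{x} \<subseteq> X"
          proof
            fix y assume "y \<in> r``{x}"
            then have "(x,y) \<in> (R \<union> R\<inverse>)\<^sup>*" unfolding r_def by auto
            moreover have "compat R X" using X by simp
            ultimately show "y \<in> X" using compat_rtrancl[of x y R X] x by simp
          qed
          moreover have "x \<in> r``{x}" using xN unfolding r_def by auto
          moreover have "r``{x} \<in> N // r" using xN by (rule quotientI)
          ultimately show "x \<in> \<Union>{C \<in> N // r. C \<subseteq> X}" by blast
        qed
      qed auto
      moreover have "{C \<in> N // r. C \<subseteq> X} \<in> Pow (N // r)" by blast
      ultimately show "X \<in> Union ` Pow (N // r)" by (rule image_eqI)
    qed
  next
    show "Union ` Pow (N // r) \<subseteq> {X \<in> Pow N. compat R X}"
    proof
      fix Y assume "Y \<in> Union ` Pow (N // r)"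
      then obtain Q where Q: "Q \<subseteq> N // r" and Y: "Y = \<Union>Q" by auto
      have "Y \<subseteq> N" using Q Y in_quotient_imp_subset[OF eq] by blast
      moreover have "compat R Y"
        unfolding compat_def
      proof (clarify)
        fix x y assume xy: "(x,y) \<in> R"
        then have "(x,y) \<in> r" "(y,x) \<in> r" using RN unfolding r_def by auto
        show "x \<in> Y \<longleftrightarrow> y \<in> Y"
        proof
          assume "x \<in> Y"
          then obtain C where "C \<in> Q" "x \<in> C" using Y by blast
          then show "y \<in> Y" using Q Y in_quotient_imp_closed[OF eq, of C x y] \<open>(x,y) \<in> r\<close> by blast
        next
          assume "y \<in> Y"
          then obtain C where "C \<in> Q" "y \<in> C" using Y by blast
          then show "x \<in> Y" using Q Y in_quotient_imp_closed[OF eq, of C y x] \<open>(y,x) \<in> r\<close> by blast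
        qed
      qed
      ultimately show "Y \<in> {X \<in> Pow N. compat R X}" by auto
    qed
  qed
  have "card {X \<in> Pow N. compat R X} = card (Pow (N // r))"
    unfolding img by (rule card_image[OF inj])
  also have "\<dots> = 2 ^ card (N // r)" using finq by (rule card_Pow)
  finally show ?thesis unfolding r_def .
qed

lemma cancel:
  fixes P :: "'a set \<Rightarrow> bool"
  assumes fin: "finite E" and e: "e \<in> E" and P: "\<And>S. S \<subseteq> E - {e} \<Longrightarrow> P (insert e S) = P S"
  shows "(\<Sum>S\<in>Pow E. if P S then (-1::real) ^ card S else 0) = 0"
proof -
  define h where "h = (\<lambda>S. if P S then (-1::real) ^ card S else 0)"
  let ?E = "E - {e}"
  have E: "E = insert e ?E" using e by auto
  have PE: "Pow E = Pow ?E \<union> insert e ` Pow ?E" by (subst E, rule Pow_insert)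
  have disj: "Pow ?E \<inter> insert e ` Pow ?E = {}" by auto
  have inj: "inj_on (insert e) (Pow ?E)" unfolding inj_on_def by blast
  have fE: "finite (Pow ?E)" using fin by simp
  have "sum h (Pow E) = sum h (Pow ?E) + sum h (insert e ` Pow ?E)"
    unfolding PE by (rule sum.union_disjoint) (use fE disj in auto)
  also have "sum h (insert e ` Pow ?E) = sum (h \<circ> insert e) (Pow ?E)"
    by (rule sum.reindex[OF inj])
  also have "sum h (Pow ?E) + sum (h \<circ> insert e) (Pow ?E) = sum (\<lambda>S. h S + h (insert e S)) (Pow ?E)"
    by (simp add: sum.distrib)
  also have "\<dots> = 0"
  proof (rule sum.neutral, rule ballI)
    fix S assume S: "S \<in> Pow ?E"
    then have fS: "finite S" using fin finite_subset by auto
    have "e \<notin> S" using S by auto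
    then have "card (insert e S) = Suc (card S)" using fS by simp
    then show "h S + h (insert e S) = 0" unfolding h_def using P[of S] S by auto
  qed
  finally show ?thesis unfolding h_def .
qed


definition cnd :: "('d \<Rightarrow> 'd) \<Rightarrow> ('d \<Rightarrow> 'd) \<Rightarrow> 'd set \<Rightarrow> 'd \<Rightarrow> bool \<Rightarrow> bool" where
  "cnd sigma iota X d b = (if b then (sigma d \<in> X \<longleftrightarrow> sigma (iota d) \<in> X) \<and> (sigma (sigma d) \<in> X \<longleftrightarrow> sigma (sigma (iota d)) \<in> X)
     else (sigma d \<in> X \<longleftrightarrow> sigma (sigma (iota d)) \<in> X) \<and> (sigma (sigma d) \<in> X \<longleftrightarrow> sigma (iota d) \<in> X))"

lemma compat_Un: "compat (A \<union> B) X \<longleftrightarrow> compat A X \<and> compat B X"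
  unfolding compat_def by blast

lemma compat_iota: "compat {(d, iota d) | d. d \<in> N} X \<longleftrightarrow> (\<forall>d\<in>N. d \<in> X \<longleftrightarrow> iota d \<in> X)"
  unfolding compat_def by blast

lemma compat_ex: "compat {p. \<exists>d\<in>M. Q d p} X \<longleftrightarrow> (\<forall>d\<in>M. compat {p. Q d p} X)"
  unfolding compat_def by blast

lemma compat_if: "compat {p. if c then p = a \<or> p = b else p = a' \<or> p = b'} X \<longleftrightarrow>
   (if c then compat {a, b} X else compat {a', b'} X)"
  unfolding compat_def by auto

lemma compat_two: "compat {(x1,y1), (x2,y2)} X \<longleftrightarrow> (x1 \<in> X \<longleftrightarrow> y1 \<in> X) \<and> (x2 \<in> X \<longleftrightarrow> y2 \<in> X)"
  unfolding compat_def by auto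

lemma res_compat:
  "compat (resolution_rel D iota sigma Md S) X \<longleftrightarrow>
    (\<forall>d\<in>D-Md. d \<in> X \<longleftrightarrow> iota d \<in> X) \<and> (\<forall>d\<in>Md. cnd sigma iota X d ({d, iota d} \<in> S))"
  unfolding resolution_rel_def compat_Un compat_iota compat_ex compat_if compat_two cnd_def
  by simp

lemma vsame:
  assumes "sigma (sigma (sigma x)) = x" "y \<in> vertex_of sigma x"
  shows "vertex_of sigma y = vertex_of sigma x"
  using assms unfolding vertex_of_def by auto


lemma pair_lemma:
  assumes tm: "trivalent_map D iota sigma" and pm: "perfect_matching D iota sigma Md"
    and a: "a \<in> D - Md" and b: "b \<in> D - Md" and ab: "a \<noteq> b"
    and bv: "b \<in> vertex_of sigma a" and abX: "a \<in> X \<longleftrightarrow> b \<in> X"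
  shows "\<exists>m\<in>Md. (sigma m \<in> X \<longleftrightarrow> sigma (sigma m) \<in> X)"
proof -
  have s3: "sigma (sigma (sigma a)) = a" using tm a unfolding trivalent_map_def by auto
  have "card ({a, sigma a, sigma (sigma a)} \<inter> Md) = 1" using pm a unfolding perfect_matching_def by auto
  then obtain m where m: "m \<in> {a, sigma a, sigma (sigma a)}" "m \<in> Md"
    by (metis card_1_singletonE insertI1 IntE)
  have "m \<noteq> a" "m \<noteq> b" using m a b by auto
  have bb: "b = sigma a \<or> b = sigma (sigma a)" using bv ab unfolding vertex_of_def by auto
  show ?thesis
  proof (rule bexI[OF _ m(2)])
    show "sigma m \<in> X \<longleftrightarrow> sigma (sigma m) \<in> X"
      using m(1) bb \<open>m \<noteq> a\<close> \<open>m \<noteq> b\<close> s3 abX by auto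
  qed
qed

lemma exists_m:
  assumes tm: "trivalent_map D iota sigma" and pm: "perfect_matching D iota sigma Md"
    and tri: "has_triangle_off_matching D iota sigma Md"
    and iX: "\<forall>d\<in>D-Md. d \<in> X \<longleftrightarrow> iota d \<in> X"
  shows "\<exists>m\<in>Md. (sigma m \<in> X \<longleftrightarrow> sigma (sigma m) \<in> X)"
proof -
  obtain d1 d2 d3 where d: "d1 \<in> D - Md" "d2 \<in> D - Md" "d3 \<in> D - Md"
    "d2 \<in> vertex_of sigma (iota d1)" "d3 \<in> vertex_of sigma (iota d2)"
    "d1 \<in> vertex_of sigma (iota d3)"
    "vertex_of sigma d1 \<noteq> vertex_of sigma d2"
    "vertex_of sigma d2 \<noteq> vertex_of sigma d3"
    "vertex_of sigma d1 \<noteq> vertex_of sigma d3"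
    using tri unfolding has_triangle_off_matching_def by blast
  have io: "iota d \<in> D" "iota (iota d) = d" if "d \<in> D" for d
    using tm that unfolding trivalent_map_def by auto
  have s3: "sigma (sigma (sigma d)) = d" if "d \<in> D" for d
    using tm that unfolding trivalent_map_def by auto
  have iN: "iota d \<in> D - Md" if "d \<in> D - Md" for d
  proof -
    have "iota d \<notin> Md"
    proof
      assume "iota d \<in> Md"
      then have "iota (iota d) \<in> Md" using pm unfolding perfect_matching_def by auto
      then show False using io that by auto
    qed
    then show ?thesis using io that by auto
  qed
  have c: "(d1 \<in> X \<longleftrightarrow> d2 \<in> X) \<or> (d2 \<in> X \<longleftrightarrow> d3 \<in> X) \<or> (d3 \<in> X \<longleftrightarrow> d1 \<in> X)" by blast
  have X1: "iota d1 \<in> X \<longleftrightarrow> d1 \<in> X" "iota d2 \<in> X \<longleftrightarrow> d2 \<in> X" "iota d3 \<in> X \<longleftrightarrow> d3 \<in> X"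
    using iX d by auto
  have v1: "vertex_of sigma d2 = vertex_of sigma (iota d1)"
    using vsame[OF s3 d(4)] iN d by auto
  have v2: "vertex_of sigma d3 = vertex_of sigma (iota d2)"
    using vsame[OF s3 d(5)] iN d by auto
  have v3: "vertex_of sigma d1 = vertex_of sigma (iota d3)"
    using vsame[OF s3 d(6)] iN d by auto
  from c show ?thesis
  proof (elim disjE)
    assume h: "d1 \<in> X \<longleftrightarrow> d2 \<in> X"
    have "iota d1 \<noteq> d2"
    proof
      assume "iota d1 = d2"
      then have "iota d2 = d1" using io d by auto
      then show False using v2 d by auto
    qed
    then show ?thesis using pair_lemma[OF tm pm iN[OF d(1)] d(2) _ d(4)] h X1 by auto
  next
    assume h: "d2 \<in> X \<longleftrightarrow> d3 \<in> X"
    have "iota d2 \<noteq> d3"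
    proof
      assume "iota d2 = d3"
      then have "iota d3 = d2" using io d by auto
      then show False using v3 d by auto
    qed
    then show ?thesis using pair_lemma[OF tm pm iN[OF d(2)] d(3) _ d(5)] h X1 by auto
  next
    assume h: "d3 \<in> X \<longleftrightarrow> d1 \<in> X"
    have "iota d3 \<noteq> d1"
    proof
      assume "iota d3 = d1"
      then have "iota d1 = d3" using io d by auto
      then show False using v1 d by auto
    qed
    then show ?thesis using pair_lemma[OF tm pm iN[OF d(3)] d(1) _ d(6)] h X1 by auto
  qed
qed


lemma nb:
  assumes tm: "trivalent_map D iota sigma" and pm: "perfect_matching D iota sigma Md" and d: "d \<in> Md"
  shows "sigma d \<in> D - Md \<and> sigma (sigma d) \<in> D - Md"
proof -
  have dD: "d \<in> D" using pm d unfolding perfect_matching_def by auto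
  have fin: "finite D" and s: "sigma d \<in> D" "sigma d \<noteq> d" "sigma (sigma d) \<in> D" "sigma (sigma (sigma d)) = d"
    using tm dD unfolding trivalent_map_def by auto
  have ss: "sigma (sigma d) \<noteq> d" using s by metis
  have c1: "card ({d, sigma d, sigma (sigma d)} \<inter> Md) = 1" using pm dD unfolding perfect_matching_def by auto
  have "sigma d \<notin> Md"
  proof
    assume "sigma d \<in> Md"
    then have "{d, sigma d} \<subseteq> {d, sigma d, sigma (sigma d)} \<inter> Md" using d by auto
    then have "card {d, sigma d} \<le> 1" using c1 by (metis card_mono finite.emptyI finite.insertI finite_Int)
    then show False using s(2) by simp
  qed
  moreover have "sigma (sigma d) \<notin> Md"
  proof
    assume "sigma (sigma d) \<in> Md"
    then have "{d, sigma (sigma d)} \<subseteq> {d, sigma d, sigma (sigma d)} \<inter> Md" using d by auto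
    then have "card {d, sigma (sigma d)} \<le> 1" using c1 by (metis card_mono finite.emptyI finite.insertI finite_Int)
    then show False using ss by simp
  qed
  ultimately show ?thesis using s by auto
qed

lemma RN:
  assumes tm: "trivalent_map D iota sigma" and pm: "perfect_matching D iota sigma Md"
  shows "resolution_rel D iota sigma Md S \<subseteq> (D - Md) \<times> (D - Md)"
proof -
  have io: "iota d \<in> D" "iota (iota d) = d" if "d \<in> D" for d
    using tm that unfolding trivalent_map_def by auto
  have iN: "iota d \<in> D - Md" if "d \<in> D - Md" for d
  proof -
    have "iota d \<notin> Md"
    proof
      assume "iota d \<in> Md"
      then have "iota (iota d) \<in> Md" using pm unfolding perfect_matching_def by auto
      then show False using io that by auto
    qed
    then show ?thesis using io that by auto
  qed
  have iM: "iota d \<in> Md" if "d \<in> Md" for d using pm that unfolding perfect_matching_def by auto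
  have A: "{(d, iota d) | d. d \<in> D - Md} \<subseteq> (D - Md) \<times> (D - Md)" using iN by auto
  have B: "(x, y) \<in> (D - Md) \<times> (D - Md)" if "d \<in> Md" "x \<in> {sigma d, sigma (sigma d)}"
    "y \<in> {sigma (iota d), sigma (sigma (iota d))}" for d x y
    using nb[OF tm pm that(1)] nb[OF tm pm iM[OF that(1)]] that by auto
  show ?thesis unfolding resolution_rel_def
  proof (rule Un_least[OF A], rule subsetI)
    fix p assume "p \<in> {p. \<exists>d\<in>Md. if {d, iota d} \<in> S
          then p = (sigma d, sigma (iota d)) \<or> p = (sigma (sigma d), sigma (sigma (iota d)))
          else p = (sigma d, sigma (sigma (iota d))) \<or> p = (sigma (sigma d), sigma (iota d))}"
    then obtain d where "d \<in> Md" and "p = (sigma d, sigma (iota d)) \<or> p = (sigma (sigma d), sigma (sigma (iota d)))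
       \<or> p = (sigma d, sigma (sigma (iota d))) \<or> p = (sigma (sigma d), sigma (iota d))"
      by (auto split: if_splits)
    then show "p \<in> (D - Md) \<times> (D - Md)" using B by blast
  qed
qed

lemma inner:
  assumes tm: "trivalent_map D iota sigma" and pm: "perfect_matching D iota sigma Md"
    and tri: "has_triangle_off_matching D iota sigma Md"
  shows "(\<Sum>S\<in>Pow (matching_edges iota Md).
     if compat (resolution_rel D iota sigma Md S) X then (-1::real) ^ card S else 0) = 0"
proof (cases "\<forall>d\<in>D-Md. d \<in> X \<longleftrightarrow> iota d \<in> X")
  case False
  then show ?thesis unfolding res_compat by (intro sum.neutral) auto
next
  case iX: True
  obtain m where m: "m \<in> Md" "sigma m \<in> X \<longleftrightarrow> sigma (sigma m) \<in> X"
    using exists_m[OF tm pm tri iX] by blast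
  have mD: "m \<in> D" using pm m unfolding perfect_matching_def by auto
  have iim: "iota (iota m) = m" using tm mD unfolding trivalent_map_def by auto
  define e where "e = {m, iota m}"
  have fin: "finite (matching_edges iota Md)"
    using tm pm unfolding trivalent_map_def perfect_matching_def matching_edges_def
    by (meson finite_imageI finite_subset)
  have eE: "e \<in> matching_edges iota Md" unfolding e_def matching_edges_def using m by auto
  have key: "cnd sigma iota X d b1 = cnd sigma iota X d b2" if "d \<in> Md" "{d, iota d} = e" for d b1 b2
  proof -
    have "d = m \<or> d = iota m" using that unfolding e_def by (metis doubleton_eq_iff)
    then show ?thesis
    proof
      assume "d = m" then show ?thesis unfolding cnd_def using m(2) by auto
    next
      assume "d = iota m" then show ?thesis unfolding cnd_def using m(2) iim by auto
    qed
  qed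
  show ?thesis
  proof (rule cancel[OF fin eE])
    fix S assume S: "S \<subseteq> matching_edges iota Md - {e}"
    have "cnd sigma iota X d ({d, iota d} \<in> insert e S) = cnd sigma iota X d ({d, iota d} \<in> S)"
      if "d \<in> Md" for d
    proof (cases "{d, iota d} = e")
      case True then show ?thesis using key that by blast
    next
      case False then show ?thesis by simp
    qed
    then show "compat (resolution_rel D iota sigma Md (insert e S)) X =
               compat (resolution_rel D iota sigma Md S) X"
      unfolding res_compat by auto
  qed
qed

theorem lemma2p9:
  fixes D :: "'d set" and iota sigma :: "'d \<Rightarrow> 'd" and Md :: "'d set"
  assumes "trivalent_map D iota sigma"
    and "planar_map D iota sigma"
    and "perfect_matching D iota sigma Md"
    and "has_triangle_off_matching D iota sigma Md"
  shows "two_factor_poly D iota sigma Md 1 = 0"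
proof -
  note tm = assms(1) and pm = assms(3) and tri = assms(4)
  define N where "N = D - Md"
  define E where "E = matching_edges iota Md"
  define R where "R = (\<lambda>S. resolution_rel D iota sigma Md S)"
  have finN: "finite N" using tm unfolding N_def trivalent_map_def by auto
  have nc: "(2::real) ^ num_curves D iota sigma Md S = (\<Sum>X\<in>Pow N. if compat (R S) X then 1 else 0)" for S
  proof -
    have "num_curves D iota sigma Md S = card (N // ((R S \<union> (R S)\<inverse>)\<^sup>* \<inter> N \<times> N))"
      unfolding num_curves_def Let_def R_def N_def ..
    then have "2 ^ num_curves D iota sigma Md S = card {X \<in> Pow N. compat (R S) X}"
      using count_compat[OF finN, of "R S"] RN[OF tm pm, of S] unfolding R_def N_def by simp
    then have "(2::real) ^ num_curves D iota sigma Md S = real (card {X \<in> Pow N. compat (R S) X})"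
      by (metis of_nat_numeral of_nat_power)
    also have "\<dots> = (\<Sum>X\<in>{X \<in> Pow N. compat (R S) X}. 1)" by simp
    also have "\<dots> = (\<Sum>X\<in>Pow N. if compat (R S) X then 1 else 0)"
      using sum.inter_filter[of "Pow N" "\<lambda>_. (1::real)" "compat (R S)"] finN by simp
    finally show ?thesis .
  qed
  have "two_factor_poly D iota sigma Md 1 = (\<Sum>S\<in>Pow E. (-1) ^ card S * 2 ^ num_curves D iota sigma Md S)"
    unfolding two_factor_poly_def E_def by simp
  also have "\<dots> = (\<Sum>S\<in>Pow E. \<Sum>X\<in>Pow N. if compat (R S) X then (-1) ^ card S else 0)"
    unfolding nc by (simp add: sum_distrib_left if_distrib cong: if_cong)
  also have "\<dots> = (\<Sum>X\<in>Pow N. \<Sum>S\<in>Pow E. if compat (R S) X then (-1) ^ card S else 0)"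
    by (rule sum.swap)
  also have "\<dots> = 0"
    unfolding E_def R_def using inner[OF tm pm tri] by simp
  finally show ?thesis .
qed

end
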